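(* Let $A,B$ be disjoint sets of positive integers with $|A|=m\ge1$, $|B|=n\ge1$, let $\sigma=\sigma_1\cdots\sigma_m$ be a signed permutation of $A$ and $\pi=\pi_1\cdots\pi_n$ a signed permutation of $B$, and suppose $\sigma_m\prec\pi_n$. Let $\mathfrak S^{sb}(\sigma,\pi)$ be the set of shuffles $\alpha=\alpha_1\cdots\alpha_{n+m}$ of $\sigma$ and $\pi$ with $\alpha_{n+m}=\sigma_m$. Then $$\sum_{\alpha\in\mathfrak S^{sb}(\sigma,\pi)}q^{\mathrm{fmaj}(\alpha)}=q^{\mathrm{fmaj}(\sigma)+\mathrm{fmaj}(\pi)+2n}{n+m-1\brack n}_{q^2}.$$
   Context: A signed permutation of a finite set $A$ of positive integers is a word $w_1\cdots w_m$ of nonzero integers such that $|w_1|\cdots|w_m|$ is an arrangement of all elements of $A$. A shuffle of two words with disjoint sets of letters is a word containing both as subsequences and consisting of exactly their letters. Order $\prec$ on nonzero integers: $-1\prec-2\prec-3\prec\cdots$ (all negatives, $-a\prec-b$ iff $a<b$) $\prec1\prec2\prec3\prec\cdots$. For a word $w$ of distinct nonzero integers, $\mathrm{maj}_\prec(w)=\sum_{i:w_i\succ w_{i+1}}i$, $\mathrm{neg}(w)$ is the number of negative letters, and $\mathrm{fmaj}(w)=2\mathrm{maj}_\prec(w)+\mathrm{neg}(w)$. $[m]_x=1+x+\dots+x^{m-1}$, $[m]_x!=[1]_x\cdots[m]_x$, $[0]_x!=1$, ${N\brack K}_x=\frac{[N]_x!}{[K]_x![N-K]_x!}$. *)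

theory Defs
  imports "HOL-Computational_Algebra.Polynomial"
begin

definition prec :: "int \<Rightarrow> int \<Rightarrow> bool" where
  "prec a b \<longleftrightarrow> (a < 0 \<and> b > 0) \<or> (a < 0 \<and> b < 0 \<and> -a < -b) \<or> (a > 0 \<and> b > 0 \<and> a < b)"

definition signed_perm :: "int list \<Rightarrow> int set \<Rightarrow> bool" where
  "signed_perm w A \<longleftrightarrow> 0 \<notin> set w \<and> distinct (map abs w) \<and> set (map abs w) = A"

text \<open>maj with respect to prec, positions 1-indexed: sum of i with w_i succ w_(i+1).\<close>
definition maj_prec :: "int list \<Rightarrow> nat" where
  "maj_prec w = (\<Sum>i\<in>{i. 1 \<le> i \<and> i < length w \<and> prec (w ! i) (w ! (i - 1))}. i)"

definition neg :: "int list \<Rightarrow> nat" where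
  "neg w = length (filter (\<lambda>x. x < 0) w)"

definition fmaj :: "int list \<Rightarrow> nat" where
  "fmaj w = 2 * maj_prec w + neg w"

definition qint :: "nat \<Rightarrow> 'a::comm_ring_1 \<Rightarrow> 'a" where
  "qint m x = (\<Sum>i<m. x ^ i)"

definition qfact :: "nat \<Rightarrow> 'a::comm_ring_1 \<Rightarrow> 'a" where
  "qfact m x = (\<Prod>i=1..m. qint i x)"

definition qbinom :: "nat \<Rightarrow> nat \<Rightarrow> 'a::{comm_ring_1,divide} \<Rightarrow> 'a" where
  "qbinom N K x = qfact N x div (qfact K x * qfact (N - K) x)"

end

theory Submission
  imports Defs
begin



lemma prec_irrefl: "\<not> prec a a" by (auto simp: prec_def)
lemma prec_asym: "prec a b \<Longrightarrow> \<not> prec b a" by (auto simp: prec_def)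
lemma prec_trans: "prec a b \<Longrightarrow> prec b c \<Longrightarrow> prec a c" by (auto simp: prec_def)
lemma prec_total: "a \<noteq> 0 \<Longrightarrow> b \<noteq> 0 \<Longrightarrow> a \<noteq> b \<Longrightarrow> prec a b \<or> prec b a"
  by (auto simp: prec_def)

lemma snoc_aux: "(x # xs \<noteq> [] \<and> hd (x#xs) = w \<and> (tl (x#xs) \<noteq> [] \<and> last (tl (x#xs)) = z \<and> zs \<in> shuffles (butlast (tl (x#xs))) (y#ys) \<or>
     (y#ys) \<noteq> [] \<and> last (y#ys) = z \<and> zs \<in> shuffles (tl (x#xs)) (butlast (y#ys))) \<or>
     (y#ys) \<noteq> [] \<and> hd (y#ys) = w \<and> ((x#xs) \<noteq> [] \<and> last (x#xs) = z \<and> zs \<in> shuffles (butlast (x#xs)) (tl (y#ys)) \<or>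
     tl (y#ys) \<noteq> [] \<and> last (tl (y#ys)) = z \<and> zs \<in> shuffles (x#xs) (butlast (tl (y#ys)))))
   \<longleftrightarrow> ((x#xs) \<noteq> [] \<and> last (x#xs) = z \<and> w # zs \<in> shuffles (butlast (x#xs)) (y#ys) \<or>
     (y#ys) \<noteq> [] \<and> last (y#ys) = z \<and> w # zs \<in> shuffles (x#xs) (butlast (y#ys)))"
  by (cases "xs = []"; cases "ys = []") (auto simp: Cons_in_shuffles_iff)

lemma snoc_nil: "[z] \<in> shuffles xs ys \<longleftrightarrow>
    (xs \<noteq> [] \<and> last xs = z \<and> [] \<in> shuffles (butlast xs) ys \<or>
     ys \<noteq> [] \<and> last ys = z \<and> [] \<in> shuffles xs (butlast ys))"
proof (cases xs)
  case Nil
  then show ?thesis by (cases ys) (auto simp: Cons_in_shuffles_iff)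
next
  case (Cons x xs')
  then show ?thesis by (cases ys) (auto simp: Cons_in_shuffles_iff split: if_splits)
qed

lemma snoc_in_shuffles_iff:
  "zs @ [z] \<in> shuffles xs ys \<longleftrightarrow>
    (xs \<noteq> [] \<and> last xs = z \<and> zs \<in> shuffles (butlast xs) ys \<or>
     ys \<noteq> [] \<and> last ys = z \<and> zs \<in> shuffles xs (butlast ys))"
proof (induction zs arbitrary: xs ys)
  case Nil
  then show ?case using snoc_nil by simp
next
  case (Cons w zs)
  have "(w # zs) @ [z] \<in> shuffles xs ys \<longleftrightarrow>
     (xs \<noteq> [] \<and> hd xs = w \<and> zs @ [z] \<in> shuffles (tl xs) ys \<or>
     ys \<noteq> [] \<and> hd ys = w \<and> zs @ [z] \<in> shuffles xs (tl ys))"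
    by (simp add: Cons_in_shuffles_iff)
  also have "\<dots> \<longleftrightarrow> (xs \<noteq> [] \<and> hd xs = w \<and> (tl xs \<noteq> [] \<and> last (tl xs) = z \<and> zs \<in> shuffles (butlast (tl xs)) ys \<or>
     ys \<noteq> [] \<and> last ys = z \<and> zs \<in> shuffles (tl xs) (butlast ys)) \<or>
     ys \<noteq> [] \<and> hd ys = w \<and> (xs \<noteq> [] \<and> last xs = z \<and> zs \<in> shuffles (butlast xs) (tl ys) \<or>
     tl ys \<noteq> [] \<and> last (tl ys) = z \<and> zs \<in> shuffles xs (butlast (tl ys))))"
    by (simp only: Cons.IH)
  also have "\<dots> \<longleftrightarrow> (xs \<noteq> [] \<and> last xs = z \<and> w # zs \<in> shuffles (butlast xs) ys \<or>
     ys \<noteq> [] \<and> last ys = z \<and> w # zs \<in> shuffles xs (butlast ys))"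
    proof (cases xs)
      case Nil then show ?thesis by (cases ys) (auto simp: Cons_in_shuffles_iff)
    next
      case (Cons x xs') note X = this
      show ?thesis
      proof (cases ys)
        case Nil then show ?thesis using X by (auto simp: Cons_in_shuffles_iff)
      next
        case (Cons y ys') show ?thesis unfolding X Cons by (rule snoc_aux)
      qed
    qed
  finally show ?case .
qed


lemma maj_snoc:
  "maj_prec (w @ [c]) = maj_prec w + (if w \<noteq> [] \<and> prec c (last w) then length w else 0)"
proof -
  let ?S = "\<lambda>w. {i. 1 \<le> i \<and> i < length w \<and> prec (w ! i) (w ! (i - 1))}"
  have eq: "?S (w @ [c]) = ?S w \<union> (if w \<noteq> [] \<and> prec c (last w) then {length w} else {})"
  proof (intro set_eqI iffI)
    fix i assume "i \<in> ?S (w @ [c])"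
    then show "i \<in> ?S w \<union> (if w \<noteq> [] \<and> prec c (last w) then {length w} else {})"
      by (cases "i = length w"; cases "w = []") (auto simp: nth_append last_conv_nth split: if_splits)
  next
    fix i assume "i \<in> ?S w \<union> (if w \<noteq> [] \<and> prec c (last w) then {length w} else {})"
    then show "i \<in> ?S (w @ [c])"
      by (auto simp: nth_append last_conv_nth split: if_splits)
  qed
  have fin: "finite (?S w)" by (rule finite_subset[of _ "{..<length w}"]) auto
  have nin: "length w \<notin> ?S w" by auto
  show ?thesis
    unfolding maj_prec_def eq using fin nin by (auto simp: sum.union_disjoint)
qed

lemma neg_shuffles: "zs \<in> shuffles xs ys \<Longrightarrow> neg zs = neg xs + neg ys"
  unfolding neg_def
  by (induction xs ys arbitrary: zs rule: shuffles.induct) auto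

lemma neg_snoc: "neg (w @ [c]) = neg w + (if c < 0 then 1 else 0)"
  by (simp add: neg_def)


fun gb :: "nat \<Rightarrow> nat \<Rightarrow> 'a::comm_ring_1 \<Rightarrow> 'a" where
  "gb n 0 x = 1"
| "gb 0 (Suc k) x = 0"
| "gb (Suc n) (Suc k) x = gb n k x + x ^ Suc k * gb n (Suc k) x"

lemma gb_zero: "n < k \<Longrightarrow> gb n k x = 0"
  by (induction n k x rule: gb.induct) auto

lemma gb_same: "gb n n x = 1"
  by (induction n) (auto simp: gb_zero)

lemma qint_add: "qint (a + b) x = qint a x + x ^ a * qint b x"
  by (induction b) (auto simp: qint_def algebra_simps power_add)

lemma qfact_Suc: "qfact (Suc n) x = qint (Suc n) x * qfact n x"
  by (simp add: qfact_def)

lemma qfact_0: "qfact 0 x = 1"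
  by (simp add: qfact_def)

lemma qfact_gb: "k \<le> n \<Longrightarrow> qfact n x = gb n k x * qfact k x * qfact (n - k) x"
proof (induction n arbitrary: k)
  case 0 then show ?case by (simp add: qfact_0)
next
  case (Suc n)
  show ?case
  proof (cases k)
    case 0 then show ?thesis by (simp add: qfact_0)
  next
    case (Suc k')
    show ?thesis
    proof (cases "k' = n")
      case True
      then show ?thesis using Suc by (simp add: gb_zero gb_same qfact_0)
    next
      case False
      with Suc Suc.prems have kn: "k' < n" by simp
      have e1: "gb n k' x * qfact (Suc k') x * qfact (n - k') x = qint (Suc k') x * qfact n x"
        using Suc.IH[of k'] kn by (simp add: qfact_Suc algebra_simps)
      have nk: "n - k' = Suc (n - Suc k')" using kn by simp
      have e2: "gb n (Suc k') x * qfact (Suc k') x * qfact (n - k') x = qint (n - k') x * qfact n x"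
        using Suc.IH[of "Suc k'"] kn unfolding nk by (simp add: qfact_Suc algebra_simps)
      have qi: "qint (Suc n) x = qint (Suc k') x + x ^ Suc k' * qint (n - k') x"
        using qint_add[of "Suc k'" "n - k'" x] kn by simp
      have "gb (Suc n) k x * qfact k x * qfact (Suc n - k) x
          = gb n k' x * qfact (Suc k') x * qfact (n - k') x
            + x ^ Suc k' * (gb n (Suc k') x * qfact (Suc k') x * qfact (n - k') x)"
        using Suc by (simp add: algebra_simps)
      also have "\<dots> = qint (Suc k') x * qfact n x + x ^ Suc k' * (qint (n - k') x * qfact n x)"
        by (simp only: e1 e2)
      also have "\<dots> = qfact (Suc n) x"
        by (simp only: qfact_Suc qi) (simp add: algebra_simps)
      finally show ?thesis by simp
    qed
  qed
qed

lemma gb_sym: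
  fixes x :: "'a::idom"
  assumes nz: "\<And>i. qfact i x \<noteq> 0" and "k \<le> n"
  shows "gb n k x = gb n (n - k) x"
proof -
  have a1: "gb n k x * (qfact k x * qfact (n - k) x) = qfact n x"
    using qfact_gb[of k n x] assms(2) by (simp add: mult.assoc)
  have a2: "gb n (n - k) x * (qfact k x * qfact (n - k) x) = qfact n x"
    using qfact_gb[of "n - k" n x] assms(2) by (simp add: algebra_simps)
  have "gb n k x * (qfact k x * qfact (n - k) x) = gb n (n - k) x * (qfact k x * qfact (n - k) x)"
    using a1 a2 by simp
  moreover have "qfact k x * qfact (n - k) x \<noteq> 0" using nz by simp
  ultimately show ?thesis by (metis mult_cancel_right)
qed

lemma gb_rec2:
  fixes x :: "'a::idom"
  assumes nz: "\<And>i. qfact i x \<noteq> 0"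
  shows "gb (Suc n) (Suc k) x = gb n (Suc k) x + x ^ (n - k) * gb n k x"
proof (cases "k \<le> n")
  case False then show ?thesis by (simp add: gb_zero)
next
  case True
  show ?thesis
  proof (cases "n - k")
    case 0
    then have "k = n" using True by simp
    then show ?thesis by (simp add: gb_zero gb_same)
  next
    case (Suc j)
    have nj: "n - j = Suc k" "j \<le> n" using True Suc by arith+
    have "gb (Suc n) (Suc k) x = gb (Suc n) (Suc j) x"
      using gb_sym[OF nz, of "Suc k" "Suc n"] True Suc by simp
    also have "\<dots> = gb n j x + x ^ Suc j * gb n (Suc j) x" by simp
    also have "gb n j x = gb n (Suc k) x"
      using gb_sym[OF nz, of j n] nj by simp
    also have "gb n (Suc j) x = gb n k x"
      using gb_sym[OF nz, of k n] True Suc by simp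
    finally show ?thesis using Suc by simp
  qed
qed

lemma qfact_X_nz: "qfact i (monom 1 2 :: int poly) \<noteq> 0"
proof -
  have "poly (qfact i (monom 1 2 :: int poly)) 1 = (\<Prod>j=1..i. int j)"
    by (simp add: qfact_def qint_def poly_prod poly_sum poly_monom)
  moreover have "(\<Prod>j=1..i. int j) \<noteq> 0" by (simp add: prod_zero_iff)
  ultimately show ?thesis by auto
qed

lemma qbinom_gb:
  assumes "k \<le> n"
  shows "qbinom n k (monom 1 2 :: int poly) = gb n k (monom 1 2)"
  unfolding qbinom_def using qfact_gb[OF assms, of "monom 1 2 :: int poly"] qfact_X_nz
  by (simp add: mult.assoc)

definition G :: "'a::comm_ring_1 \<Rightarrow> int list \<Rightarrow> int list \<Rightarrow> int \<Rightarrow> 'a" where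
  "G x u v c = (\<Sum>\<alpha>\<in>{\<alpha> \<in> shuffles u v. last \<alpha> = c}. x ^ maj_prec \<alpha>)"

lemma last_shuffles:
  assumes "\<alpha> \<in> shuffles u v" "u \<noteq> []" "v \<noteq> []"
  shows "last \<alpha> = last u \<or> last \<alpha> = last v"
proof -
  have "\<alpha> \<noteq> []" using assms by auto
  then have "butlast \<alpha> @ [last \<alpha>] \<in> shuffles u v" using assms(1) by simp
  then show ?thesis unfolding snoc_in_shuffles_iff by auto
qed

lemma shuffles_last_left:
  assumes "c \<notin> set v"
  shows "{\<alpha> \<in> shuffles (u' @ [c]) v. last \<alpha> = c} = (\<lambda>\<alpha>. \<alpha> @ [c]) ` shuffles u' v"
proof (intro set_eqI iffI)
  fix \<alpha> assume "\<alpha> \<in> {\<alpha> \<in> shuffles (u' @ [c]) v. last \<alpha> = c}"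
  then have a: "\<alpha> \<in> shuffles (u' @ [c]) v" "last \<alpha> = c" by auto
  then have "\<alpha> \<noteq> []" by auto
  then have e: "\<alpha> = butlast \<alpha> @ [c]" using a(2) append_butlast_last_id by metis
  then have "butlast \<alpha> @ [c] \<in> shuffles (u' @ [c]) v" using a by simp
  then have "butlast \<alpha> \<in> shuffles u' v" unfolding snoc_in_shuffles_iff using assms
    by (auto dest: last_in_set)
  then show "\<alpha> \<in> (\<lambda>\<alpha>. \<alpha> @ [c]) ` shuffles u' v" using e by blast
next
  fix \<alpha> assume "\<alpha> \<in> (\<lambda>\<alpha>. \<alpha> @ [c]) ` shuffles u' v"
  then show "\<alpha> \<in> {\<alpha> \<in> shuffles (u' @ [c]) v. last \<alpha> = c}"
    by (auto simp: snoc_in_shuffles_iff)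
qed

lemma shuffles_last_right:
  assumes "c \<notin> set u"
  shows "{\<alpha> \<in> shuffles u (v' @ [c]). last \<alpha> = c} = (\<lambda>\<alpha>. \<alpha> @ [c]) ` shuffles u v'"
  using shuffles_last_left[OF assms, of v'] by (simp add: shuffles_commutes)

lemma sum_snoc_image:
  "(\<Sum>\<alpha>\<in>(\<lambda>\<alpha>. \<alpha> @ [c]) ` S. f \<alpha>) = (\<Sum>\<alpha>\<in>S. f (\<alpha> @ [c]))"
  by (subst sum.reindex) (auto simp: inj_on_def)

lemma sum_split_last:
  assumes "u \<noteq> []" "v \<noteq> []" "last u \<noteq> last v"
  shows "(\<Sum>\<alpha>\<in>shuffles u v. f \<alpha>) =
    (\<Sum>\<alpha>\<in>{\<alpha> \<in> shuffles u v. last \<alpha> = last u}. f \<alpha>) + (\<Sum>\<alpha>\<in>{\<alpha> \<in> shuffles u v. last \<alpha> = last v}. f \<alpha>)"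
proof -
  have "shuffles u v = {\<alpha> \<in> shuffles u v. last \<alpha> = last u} \<union> {\<alpha> \<in> shuffles u v. last \<alpha> = last v}"
    using last_shuffles[OF _ assms(1,2)] by blast
  then show ?thesis using assms(3)
    by (subst sum.union_disjoint[symmetric]) auto
qed

lemma sum_snoc_last:
  assumes "\<And>\<alpha>. \<alpha> \<in> S \<Longrightarrow> \<alpha> \<noteq> [] \<and> last \<alpha> = l \<and> length \<alpha> = L"
  shows "(\<Sum>\<alpha>\<in>S. (x::'a::comm_ring_1) ^ maj_prec (\<alpha> @ [c])) = x ^ (if prec c l then L else 0) * (\<Sum>\<alpha>\<in>S. x ^ maj_prec \<alpha>)"
  unfolding sum_distrib_left
  by (rule sum.cong) (use assms in \<open>auto simp: maj_snoc power_add\<close>)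



lemma algU_A:
  fixes x :: "'a::idom" assumes nz: "\<And>i. qfact i x \<noteq> 0"
  shows "x ^ (if d then Suc a + Suc b else 0) * (x ^ (m1 + m2 + Suc b) * gb (Suc a + b) (Suc b) x)
       + x ^ (Suc a + Suc b) * (x ^ (m1 + m2) * gb (Suc a + b) b x)
       = x ^ (m1 + (if d then Suc a else 0) + m2 + Suc b) * gb (Suc a + Suc b) (Suc b) x"
proof (cases d)
  case True
  have r: "gb (Suc a + Suc b) (Suc b) x = gb (Suc a + b) b x + x ^ Suc b * gb (Suc a + b) (Suc b) x"
    using gb.simps(3)[of "Suc a + b" b x] by (simp del: gb.simps)
  show ?thesis using True unfolding r by (simp add: power_add algebra_simps)
next
  case False
  have r: "gb (Suc a + Suc b) (Suc b) x = gb (Suc a + b) (Suc b) x + x ^ Suc a * gb (Suc a + b) b x"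
    using gb_rec2[OF nz, of "Suc a + b" b] by simp
  show ?thesis using False unfolding r by (simp add: power_add algebra_simps)
qed

lemma algU_B:
  fixes x :: "'a::idom" assumes nz: "\<And>i. qfact i x \<noteq> 0"
  shows "x ^ (Suc a + Suc b) * (x ^ (m2 + m1) * gb (b + Suc a) a x)
       + x ^ (Suc a + Suc b) * (x ^ (m2 + m1 + Suc a) * gb (b + Suc a) (Suc a) x)
       = x ^ (m1 + Suc a + m2 + Suc b) * gb (Suc a + Suc b) (Suc b) x"
proof -
  have s1: "gb (b + Suc a) a x = gb (Suc a + b) (Suc b) x"
    using gb_sym[OF nz, of a "b + Suc a"] by (simp add: add.commute)
  have s2: "gb (b + Suc a) (Suc a) x = gb (Suc a + b) b x"
    using gb_sym[OF nz, of "Suc a" "b + Suc a"] by (simp add: add.commute)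
  have r: "gb (Suc a + Suc b) (Suc b) x = gb (Suc a + b) (Suc b) x + x ^ Suc a * gb (Suc a + b) b x"
    using gb_rec2[OF nz, of "Suc a + b" b] by simp
  show ?thesis unfolding r s1 s2 by (simp add: power_add algebra_simps)
qed

lemma algV_A:
  fixes x :: "'a::idom" assumes nz: "\<And>i. qfact i x \<noteq> 0"
  shows "(x ^ (m1 + m2 + Suc b) * gb (a + Suc b) (Suc b) x)
       + x ^ (if f then Suc a + Suc b else 0) * (x ^ (m1 + m2) * gb (a + Suc b) b x)
       = x ^ (m1 + (m2 + (if f then Suc b else 0))) * gb (Suc a + Suc b) (Suc b) x"
proof (cases f)
  case True
  have r: "gb (Suc a + Suc b) (Suc b) x = gb (a + Suc b) (Suc b) x + x ^ Suc a * gb (a + Suc b) b x"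
    using gb_rec2[OF nz, of "a + Suc b" b] by simp
  show ?thesis using True unfolding r by (simp add: power_add algebra_simps)
next
  case False
  have r: "gb (Suc a + Suc b) (Suc b) x = gb (a + Suc b) b x + x ^ Suc b * gb (a + Suc b) (Suc b) x"
    using gb.simps(3)[of "a + Suc b" b x] by (simp del: gb.simps)
  show ?thesis using False unfolding r by (simp add: power_add algebra_simps)
qed

lemma algV_B:
  fixes x :: "'a::idom" assumes nz: "\<And>i. qfact i x \<noteq> 0"
  shows "x ^ (m2 + m1) * gb (b + Suc a) a x
       + x ^ (m2 + m1 + Suc a) * gb (b + Suc a) (Suc a) x
       = x ^ (m1 + m2) * gb (Suc a + Suc b) (Suc b) x"
proof -
  have s1: "gb (b + Suc a) a x = gb (a + Suc b) (Suc b) x"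
    using gb_sym[OF nz, of a "b + Suc a"] by (simp add: add.commute)
  have s2: "gb (b + Suc a) (Suc a) x = gb (a + Suc b) b x"
    using gb_sym[OF nz, of "Suc a" "b + Suc a"] by (simp add: add.commute)
  have r: "gb (Suc a + Suc b) (Suc b) x = gb (a + Suc b) (Suc b) x + x ^ Suc a * gb (a + Suc b) b x"
    using gb_rec2[OF nz, of "a + Suc b" b] by simp
  show ?thesis unfolding r s1 s2 by (simp add: power_add algebra_simps)
qed


lemma maj_nil: "maj_prec [] = 0" by (simp add: maj_prec_def)

lemma core:
  fixes x :: "'a::idom"
  assumes nz: "\<And>i. qfact i x \<noteq> 0"
  shows "u \<noteq> [] \<Longrightarrow> v \<noteq> [] \<Longrightarrow> distinct (u @ v) \<Longrightarrow> 0 \<notin> set (u @ v) \<Longrightarrow> prec (last u) (last v) \<Longrightarrow>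
   G x u v (last u) = x ^ (maj_prec u + maj_prec v + length v) * gb (length u + length v - 1) (length v) x \<and>
   G x u v (last v) = x ^ (maj_prec u + maj_prec v) * gb (length u + length v - 1) (length v - 1) x"
proof (induction "length u + length v" arbitrary: u v rule: less_induct)
  case less
  obtain u' c where u: "u = u' @ [c]" using less.prems(1) rev_exhaust by metis
  obtain v' e where v: "v = v' @ [e]" using less.prems(2) rev_exhaust by metis
  have ce: "prec c e" using less.prems(5) u v by simp
  have disj: "set u \<inter> set v = {}" and du: "distinct u" and dv: "distinct v"
    using less.prems(3) by auto
  have c_nv: "c \<notin> set v" using disj u by auto
  have e_nu: "e \<notin> set u" using disj v by auto
  have nz0: "0 \<notin> set u" "0 \<notin> set v" using less.prems(4) by auto
  have GU0: "G x u v c = (\<Sum>\<alpha>\<in>shuffles u' v. x ^ maj_prec (\<alpha> @ [c]))"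
    unfolding G_def u shuffles_last_left[OF c_nv] sum_snoc_image ..
  have GV0: "G x u v e = (\<Sum>\<alpha>\<in>shuffles u v'. x ^ maj_prec (\<alpha> @ [e]))"
    unfolding G_def v shuffles_last_right[OF e_nu] sum_snoc_image ..
  have mu: "maj_prec u = maj_prec u' + (if u' \<noteq> [] \<and> prec c (last u') then length u' else 0)"
    unfolding u by (rule maj_snoc)
  have mv: "maj_prec v = maj_prec v' + (if v' \<noteq> [] \<and> prec e (last v') then length v' else 0)"
    unfolding v by (rule maj_snoc)
  have GU: "G x u v c = x ^ (maj_prec u + maj_prec v + length v) * gb (length u + length v - 1) (length v) x"
  proof (cases "u' = []")
    case True
    have "G x u v c = x ^ maj_prec (v @ [c])" unfolding GU0 True by simp
    also have "\<dots> = x ^ (maj_prec v + length v)"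
    proof -
      have "last v = e" using v by simp
      then show ?thesis using maj_snoc[of v c] ce less.prems(2) by simp
    qed
    moreover have "maj_prec [c] = 0" using maj_snoc[of "[]" c] by (simp add: maj_nil)
    ultimately show ?thesis using True u by (simp add: gb_same)
  next
    case False
    define l where "l = last u'"
    have l_in: "l \<in> set u" using False u l_def by simp
    have le: "l \<noteq> e" using l_in e_nu by auto
    have lnz: "l \<noteq> 0" using l_in nz0 by auto
    have enz: "e \<noteq> 0" using nz0 v by auto
    obtain a where a: "length u' = Suc a" using False by (cases u') auto
    obtain b where b: "length v = Suc b" using v by simp
    have lens: "\<And>\<alpha>. \<alpha> \<in> shuffles u' v \<Longrightarrow> \<alpha> \<noteq> [] \<and> length \<alpha> = Suc a + Suc b"
      using a b by (auto dest: length_shuffles)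
    have split: "G x u v c = x ^ (if prec c l then Suc a + Suc b else 0) * G x u' v l
                 + x ^ (Suc a + Suc b) * G x u' v e"
    proof -
      have "G x u v c = (\<Sum>\<alpha>\<in>{\<alpha> \<in> shuffles u' v. last \<alpha> = l}. x ^ maj_prec (\<alpha> @ [c]))
          + (\<Sum>\<alpha>\<in>{\<alpha> \<in> shuffles u' v. last \<alpha> = e}. x ^ maj_prec (\<alpha> @ [c]))"
        unfolding GU0 using sum_split_last[OF False less.prems(2)] le l_def v by simp
      also have "(\<Sum>\<alpha>\<in>{\<alpha> \<in> shuffles u' v. last \<alpha> = l}. x ^ maj_prec (\<alpha> @ [c]))
          = x ^ (if prec c l then Suc a + Suc b else 0) * G x u' v l"
        unfolding G_def by (rule sum_snoc_last) (use lens in auto)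
      also have "(\<Sum>\<alpha>\<in>{\<alpha> \<in> shuffles u' v. last \<alpha> = e}. x ^ maj_prec (\<alpha> @ [c]))
          = x ^ (if prec c e then Suc a + Suc b else 0) * G x u' v e"
        unfolding G_def by (rule sum_snoc_last) (use lens in auto)
      finally show ?thesis using ce by simp
    qed
    have lt: "length u' + length v < length u + length v" using u by simp
    have d': "distinct (u' @ v)" "0 \<notin> set (u' @ v)" "distinct (v @ u')" "0 \<notin> set (v @ u')"
      using less.prems(3,4) u by auto
    have mu': "maj_prec u = maj_prec u' + (if prec c l then Suc a else 0)"
      using mu False a l_def by simp
    have lv: "last v = e" using v by simp
    show ?thesis
    proof (cases "prec l e")
      case True
      have IH: "G x u' v l = x ^ (maj_prec u' + maj_prec v + Suc b) * gb (Suc a + b) (Suc b) x"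
               "G x u' v e = x ^ (maj_prec u' + maj_prec v) * gb (Suc a + b) b x"
        using less.hyps[OF lt False less.prems(2) d'(1,2)] True l_def lv a b by auto
      show ?thesis unfolding split IH mu' using algU_A[OF nz] a b u by simp
    next
      case False
      then have pel: "prec e l" using prec_total[OF lnz enz le] by auto
      have pcl: "prec c l" using prec_trans[OF ce pel] .
      have lt2: "length v + length u' < length u + length v" using u by simp
      have IH: "G x v u' e = x ^ (maj_prec v + maj_prec u' + Suc a) * gb (b + Suc a) (Suc a) x"
               "G x v u' l = x ^ (maj_prec v + maj_prec u') * gb (b + Suc a) a x"
        using less.hyps[OF lt2 less.prems(2) \<open>u' \<noteq> []\<close> d'(3,4)] pel l_def lv a b by auto
      have sw: "G x u' v = G x v u'" unfolding G_def[abs_def] by (simp add: shuffles_commutes)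
      show ?thesis unfolding split sw IH mu' using algU_B[OF nz] a b u pcl by simp
    qed
  qed
  have GV: "G x u v e = x ^ (maj_prec u + maj_prec v) * gb (length u + length v - 1) (length v - 1) x"
  proof (cases "v' = []")
    case True
    have "G x u v e = x ^ maj_prec (u @ [e])" unfolding GV0 True by simp
    also have "\<dots> = x ^ maj_prec u"
    proof -
      have "last u = c" using u by simp
      then show ?thesis using maj_snoc[of u e] ce prec_asym by auto
    qed
    moreover have "maj_prec [e] = 0" using maj_snoc[of "[]" e] by (simp add: maj_nil)
    ultimately show ?thesis using True v by simp
  next
    case False
    define l where "l = last v'"
    have l_in: "l \<in> set v" using False v l_def by simp
    have lc: "l \<noteq> c" using l_in c_nv by auto
    have lnz: "l \<noteq> 0" using l_in nz0 by auto
    have cnz: "c \<noteq> 0" using nz0 u by auto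
    obtain b where b: "length v' = Suc b" using False by (cases v') auto
    obtain a where a: "length u = Suc a" using u by simp
    have lens: "\<And>\<alpha>. \<alpha> \<in> shuffles u v' \<Longrightarrow> \<alpha> \<noteq> [] \<and> length \<alpha> = Suc a + Suc b"
      using a b by (auto dest: length_shuffles)
    have nec: "\<not> prec e c" using ce prec_asym by auto
    have split: "G x u v e = G x u v' c
                 + x ^ (if prec e l then Suc a + Suc b else 0) * G x u v' l"
    proof -
      have "G x u v e = (\<Sum>\<alpha>\<in>{\<alpha> \<in> shuffles u v'. last \<alpha> = c}. x ^ maj_prec (\<alpha> @ [e]))
          + (\<Sum>\<alpha>\<in>{\<alpha> \<in> shuffles u v'. last \<alpha> = l}. x ^ maj_prec (\<alpha> @ [e]))"
        unfolding GV0 using sum_split_last[OF less.prems(1) False] lc l_def u by simp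
      also have "(\<Sum>\<alpha>\<in>{\<alpha> \<in> shuffles u v'. last \<alpha> = l}. x ^ maj_prec (\<alpha> @ [e]))
          = x ^ (if prec e l then Suc a + Suc b else 0) * G x u v' l"
        unfolding G_def by (rule sum_snoc_last) (use lens in auto)
      also have "(\<Sum>\<alpha>\<in>{\<alpha> \<in> shuffles u v'. last \<alpha> = c}. x ^ maj_prec (\<alpha> @ [e]))
          = x ^ (if prec e c then Suc a + Suc b else 0) * G x u v' c"
        unfolding G_def by (rule sum_snoc_last) (use lens in auto)
      finally show ?thesis using nec by simp
    qed
    have lt: "length u + length v' < length u + length v" using v by simp
    have d': "distinct (u @ v')" "0 \<notin> set (u @ v')" "distinct (v' @ u)" "0 \<notin> set (v' @ u)"
      using less.prems(3,4) v by auto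
    have mv': "maj_prec v = maj_prec v' + (if prec e l then Suc b else 0)"
      using mv False b l_def by simp
    have lu: "last u = c" using u by simp
    show ?thesis
    proof (cases "prec c l")
      case True
      have IH: "G x u v' c = x ^ (maj_prec u + maj_prec v' + Suc b) * gb (a + Suc b) (Suc b) x"
               "G x u v' l = x ^ (maj_prec u + maj_prec v') * gb (a + Suc b) b x"
        using less.hyps[OF lt less.prems(1) False d'(1,2)] True l_def lu a b by auto
      show ?thesis unfolding split IH mv' using algV_A[OF nz] a b v by simp
    next
      case False
      then have plc: "prec l c" using prec_total[OF lnz cnz lc] by auto
      have nel: "\<not> prec e l" using prec_trans[OF plc ce] prec_asym by auto
      have lt2: "length v' + length u < length u + length v" using v by simp
      have IH: "G x v' u l = x ^ (maj_prec v' + maj_prec u + Suc a) * gb (b + Suc a) (Suc a) x"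
               "G x v' u c = x ^ (maj_prec v' + maj_prec u) * gb (b + Suc a) a x"
        using less.hyps[OF lt2 \<open>v' \<noteq> []\<close> less.prems(1) d'(3,4)] plc l_def lu a b by auto
      have sw: "G x u v' = G x v' u" unfolding G_def[abs_def] by (simp add: shuffles_commutes)
      show ?thesis unfolding split sw IH mv' using algV_B[OF nz] a b v nel by simp
    qed
  qed
  show ?case using GU GV u v by simp
qed


theorem lemma5p7:
  fixes A B :: "int set" and \<sigma> \<pi> :: "int list"
  assumes "finite A" and "finite B"
    and "\<forall>a\<in>A. a > 0" and "\<forall>b\<in>B. b > 0"
    and "A \<inter> B = {}"
    and "card A \<ge> 1" and "card B \<ge> 1"
    and "signed_perm \<sigma> A" and "signed_perm \<pi> B"
    and "prec (last \<sigma>) (last \<pi>)"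
  shows "(\<Sum>\<alpha>\<in>{\<alpha> \<in> shuffles \<sigma> \<pi>. last \<alpha> = last \<sigma>}. (monom 1 (fmaj \<alpha>) :: int poly))
       = monom 1 (fmaj \<sigma> + fmaj \<pi> + 2 * length \<pi>)
         * qbinom (length \<pi> + length \<sigma> - 1) (length \<pi>) (monom 1 2 :: int poly)"
proof -
  define x where "x = (monom 1 2 :: int poly)"
  have sp: "0 \<notin> set \<sigma>" "distinct (map abs \<sigma>)" "abs ` set \<sigma> = A"
           "0 \<notin> set \<pi>" "distinct (map abs \<pi>)" "abs ` set \<pi> = B"
    using assms(8,9) unfolding signed_perm_def by auto
  have ne: "\<sigma> \<noteq> []" "\<pi> \<noteq> []" using assms(6,7) sp(3,6) by auto
  have dist: "distinct (\<sigma> @ \<pi>)"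
  proof -
    have "distinct \<sigma>" "distinct \<pi>" using sp(2,5) distinct_map by auto
    moreover have "set \<sigma> \<inter> set \<pi> = {}" using assms(5) sp(3,6) by auto
    ultimately show ?thesis by simp
  qed
  have z: "0 \<notin> set (\<sigma> @ \<pi>)" using sp by simp
  have C: "G x \<sigma> \<pi> (last \<sigma>) = x ^ (maj_prec \<sigma> + maj_prec \<pi> + length \<pi>) * gb (length \<sigma> + length \<pi> - 1) (length \<pi>) x"
    using core[of x \<sigma> \<pi>] qfact_X_nz ne dist z assms(10) unfolding x_def by blast
  have xp: "\<And>m. x ^ m = monom 1 (2 * m)" unfolding x_def by (simp add: monom_power mult.commute)
  have L: "(\<Sum>\<alpha>\<in>{\<alpha> \<in> shuffles \<sigma> \<pi>. last \<alpha> = last \<sigma>}. (monom 1 (fmaj \<alpha>) :: int poly))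
        = monom 1 (neg \<sigma> + neg \<pi>) * G x \<sigma> \<pi> (last \<sigma>)"
    unfolding G_def sum_distrib_left
  proof (rule sum.cong)
    fix \<alpha> assume "\<alpha> \<in> {\<alpha> \<in> shuffles \<sigma> \<pi>. last \<alpha> = last \<sigma>}"
    then have "neg \<alpha> = neg \<sigma> + neg \<pi>" using neg_shuffles by auto
    then show "monom 1 (fmaj \<alpha>) = monom 1 (neg \<sigma> + neg \<pi>) * x ^ maj_prec \<alpha>"
      unfolding fmaj_def xp mult_monom by (simp add: add.commute)
  qed simp
  have le: "length \<pi> \<le> length \<pi> + length \<sigma> - 1" using ne by (cases \<sigma>) auto
  have Q: "qbinom (length \<pi> + length \<sigma> - 1) (length \<pi>) (monom 1 2 :: int poly)
         = gb (length \<sigma> + length \<pi> - 1) (length \<pi>) x"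
    using qbinom_gb[OF le] unfolding x_def by (simp add: add.commute)
  show ?thesis unfolding L C Q
    by (simp add: fmaj_def xp mult_monom algebra_simps)
qed
end
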